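(* Let $K\subseteq L\subseteq M$ be finite extensions inside $\bar K$. If $M\cap\tilde L=L$ and $[M:L]=r_K(M)/r_K(L)$, then $M/L$ is Galois.
   Context: $K$ is a perfect field with a fixed algebraic closure $\bar K$. For a finite extension $L/K$, $\tilde L$ denotes its Galois closure in $\bar K$. Writing $L=K(\alpha)$ with $f$ the minimal polynomial of $\alpha$ over $K$, the cluster size $r_K(L)$ is the number of roots of $f$ lying in $L$ (independent of the choice of $\alpha$; it equals $|{\rm Aut}(L/K)|$). *)

theory Defs
  imports "HOL-Computational_Algebra.Polynomial"
begin

text \<open>The ambient type 'a plays the role of the algebraic closure of K.
  Subfields of it are represented as sets.\<close>

definition is_subfield :: "'a::field set \<Rightarrow> bool" where
  "is_subfield S \<longleftrightarrow> 0 \<in> S \<and> 1 \<in> S \<and>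
     (\<forall>x\<in>S. \<forall>y\<in>S. x + y \<in> S \<and> x - y \<in> S \<and> x * y \<in> S) \<and>
     (\<forall>x\<in>S. inverse x \<in> S)"

definition polys_over :: "'a::field set \<Rightarrow> 'a poly set" where
  "polys_over S = {p. \<forall>i. coeff p i \<in> S}"

definition alg_closed_type :: "'a::field itself \<Rightarrow> bool" where
  "alg_closed_type _ \<longleftrightarrow> (\<forall>p::'a poly. degree p > 0 \<longrightarrow> (\<exists>x. poly p x = 0))"

definition algebraic_over :: "'a::field set \<Rightarrow> 'a \<Rightarrow> bool" where
  "algebraic_over K x \<longleftrightarrow> (\<exists>p\<in>polys_over K. p \<noteq> 0 \<and> poly p x = 0)"

definition perfect_field :: "'a::field set \<Rightarrow> bool" where
  "perfect_field K \<longleftrightarrow> is_subfield K \<and>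
     (CHAR('a) = 0 \<or> (\<forall>x\<in>K. \<exists>y\<in>K. y ^ CHAR('a) = x))"

definition minpoly :: "'a::field set \<Rightarrow> 'a \<Rightarrow> 'a poly" where
  "minpoly L x = (SOME p. p \<in> polys_over L \<and> lead_coeff p = 1 \<and> poly p x = 0 \<and>
       (\<forall>q\<in>polys_over L. q \<noteq> 0 \<and> poly q x = 0 \<longrightarrow> degree p \<le> degree q))"

definition span_over :: "'a::field set \<Rightarrow> 'a set \<Rightarrow> 'a set" where
  "span_over L S = {(\<Sum>s\<in>T. c s * s) | T c. finite T \<and> T \<subseteq> S \<and> (\<forall>s\<in>T. c s \<in> L)}"

definition finite_ext :: "'a::field set \<Rightarrow> 'a set \<Rightarrow> bool" where
  "finite_ext L M \<longleftrightarrow> is_subfield L \<and> is_subfield M \<and> L \<subseteq> M \<and>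
     (\<exists>S. finite S \<and> S \<subseteq> M \<and> span_over L S = M)"

definition ext_degree :: "'a::field set \<Rightarrow> 'a set \<Rightarrow> nat" where
  "ext_degree L M = (LEAST n. \<exists>S. finite S \<and> card S = n \<and> S \<subseteq> M \<and> span_over L S = M)"

definition gen_field :: "'a::field set \<Rightarrow> 'a \<Rightarrow> 'a set" where
  "gen_field K \<alpha> = \<Inter>{F. is_subfield F \<and> K \<subseteq> F \<and> \<alpha> \<in> F}"

definition normal_ext :: "'a::field set \<Rightarrow> 'a set \<Rightarrow> bool" where
  "normal_ext L M \<longleftrightarrow> (\<forall>x\<in>M. \<forall>y. poly (minpoly L x) y = 0 \<longrightarrow> y \<in> M)"

definition separable_ext :: "'a::field set \<Rightarrow> 'a set \<Rightarrow> bool" where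
  "separable_ext L M \<longleftrightarrow> (\<forall>x\<in>M. rsquarefree (minpoly L x))"

definition galois_ext :: "'a::field set \<Rightarrow> 'a set \<Rightarrow> bool" where
  "galois_ext L M \<longleftrightarrow> normal_ext L M \<and> separable_ext L M"

definition galois_closure :: "'a::field set \<Rightarrow> 'a set \<Rightarrow> 'a set" where
  "galois_closure K L = \<Inter>{N. is_subfield N \<and> L \<subseteq> N \<and> normal_ext K N}"

definition cluster_size :: "'a::field set \<Rightarrow> 'a set \<Rightarrow> nat" where
  "cluster_size K L = (let \<alpha> = (SOME \<alpha>. \<alpha> \<in> L \<and> L = gen_field K \<alpha>)
     in card {\<beta>\<in>L. poly (minpoly K \<alpha>) \<beta> = 0})"

end

theory Submission
  imports Defs "HOL-Algebra.Multiplicative_Group"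
begin

hide_const (open) up_ring.coeff up_ring.monom module.smult Coset.order



section \<open>Subfields\<close>

lemma sf_0: "is_subfield F \<Longrightarrow> 0 \<in> F" by (simp add: is_subfield_def)
lemma sf_1: "is_subfield F \<Longrightarrow> 1 \<in> F" by (simp add: is_subfield_def)
lemma sf_add: "is_subfield F \<Longrightarrow> x \<in> F \<Longrightarrow> y \<in> F \<Longrightarrow> x + y \<in> F" by (simp add: is_subfield_def)
lemma sf_diff: "is_subfield F \<Longrightarrow> x \<in> F \<Longrightarrow> y \<in> F \<Longrightarrow> x - y \<in> F" by (simp add: is_subfield_def)
lemma sf_mult: "is_subfield F \<Longrightarrow> x \<in> F \<Longrightarrow> y \<in> F \<Longrightarrow> x * y \<in> F" by (simp add: is_subfield_def)
lemma sf_inv: "is_subfield F \<Longrightarrow> x \<in> F \<Longrightarrow> inverse x \<in> F" by (simp add: is_subfield_def)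
lemma sf_uminus: "is_subfield F \<Longrightarrow> x \<in> F \<Longrightarrow> - x \<in> F"
  using sf_diff[of F 0 x] sf_0[of F] by simp
lemma sf_divide: "is_subfield F \<Longrightarrow> x \<in> F \<Longrightarrow> y \<in> F \<Longrightarrow> x / y \<in> F"
  by (simp add: divide_inverse sf_mult sf_inv)
lemma sf_power: "is_subfield F \<Longrightarrow> x \<in> F \<Longrightarrow> x ^ n \<in> F"
  by (induction n) (auto simp: sf_1 sf_mult)
lemma sf_sum: "is_subfield F \<Longrightarrow> (\<And>i. i \<in> I \<Longrightarrow> f i \<in> F) \<Longrightarrow> sum f I \<in> F"
  by (induction I rule: infinite_finite_induct) (auto simp: sf_0 sf_add)
lemma sf_prod: "is_subfield F \<Longrightarrow> (\<And>i. i \<in> I \<Longrightarrow> f i \<in> F) \<Longrightarrow> prod f I \<in> F"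
  by (induction I rule: infinite_finite_induct) (auto simp: sf_1 sf_mult)
lemma sf_of_nat: "is_subfield F \<Longrightarrow> of_nat n \<in> F"
  by (induction n) (auto simp: sf_0 sf_1 sf_add)

lemma sf_UNIV: "is_subfield (UNIV :: 'a::field set)" by (simp add: is_subfield_def)

section \<open>Polynomials over a subfield\<close>

lemma po_coeff: "p \<in> polys_over F \<Longrightarrow> coeff p i \<in> F" by (simp add: polys_over_def)
lemma po_I: "(\<And>i. coeff p i \<in> F) \<Longrightarrow> p \<in> polys_over F" by (simp add: polys_over_def)

lemma po_0: "is_subfield F \<Longrightarrow> 0 \<in> polys_over F" by (simp add: polys_over_def sf_0)
lemma po_const: "is_subfield F \<Longrightarrow> c \<in> F \<Longrightarrow> [:c:] \<in> polys_over F"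
  by (simp add: polys_over_def coeff_pCons sf_0 split: nat.split)
lemma po_1: "is_subfield F \<Longrightarrow> 1 \<in> polys_over F"
  using po_const[of F 1] by (simp add: sf_1 one_pCons)
lemma po_pCons: "is_subfield F \<Longrightarrow> c \<in> F \<Longrightarrow> p \<in> polys_over F \<Longrightarrow> pCons c p \<in> polys_over F"
  by (simp add: polys_over_def coeff_pCons split: nat.split)
lemma po_pCons_iff: "pCons c p \<in> polys_over F \<longleftrightarrow> c \<in> F \<and> p \<in> polys_over F"
proof (intro iffI conjI)
  assume h: "pCons c p \<in> polys_over F"
  have "coeff (pCons c p) 0 \<in> F" using h by (rule po_coeff)
  then show "c \<in> F" by simp
  show "p \<in> polys_over F"
  proof (rule po_I)
    fix i have "coeff (pCons c p) (Suc i) \<in> F" using h by (rule po_coeff)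
    then show "coeff p i \<in> F" by simp
  qed
next
  assume "c \<in> F \<and> p \<in> polys_over F"
  then show "pCons c p \<in> polys_over F" by (auto simp: polys_over_def coeff_pCons split: nat.split)
qed
lemma po_add: "is_subfield F \<Longrightarrow> p \<in> polys_over F \<Longrightarrow> q \<in> polys_over F \<Longrightarrow> p + q \<in> polys_over F"
  by (simp add: polys_over_def sf_add)
lemma po_diff: "is_subfield F \<Longrightarrow> p \<in> polys_over F \<Longrightarrow> q \<in> polys_over F \<Longrightarrow> p - q \<in> polys_over F"
  by (simp add: polys_over_def sf_diff)
lemma po_uminus: "is_subfield F \<Longrightarrow> p \<in> polys_over F \<Longrightarrow> - p \<in> polys_over F"
  by (simp add: polys_over_def sf_uminus)
lemma po_smult: "is_subfield F \<Longrightarrow> c \<in> F \<Longrightarrow> p \<in> polys_over F \<Longrightarrow> smult c p \<in> polys_over F"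
  by (simp add: polys_over_def sf_mult)
lemma po_monom: "is_subfield F \<Longrightarrow> c \<in> F \<Longrightarrow> monom c n \<in> polys_over F"
  by (simp add: polys_over_def coeff_monom sf_0)
lemma po_mult: "is_subfield F \<Longrightarrow> p \<in> polys_over F \<Longrightarrow> q \<in> polys_over F \<Longrightarrow> p * q \<in> polys_over F"
  by (auto simp: polys_over_def coeff_mult intro!: sf_sum sf_mult)
lemma po_power: "is_subfield F \<Longrightarrow> p \<in> polys_over F \<Longrightarrow> p ^ n \<in> polys_over F"
  by (induction n) (auto simp: po_1 po_mult)
lemma po_sum: "is_subfield F \<Longrightarrow> (\<And>i. i \<in> I \<Longrightarrow> f i \<in> polys_over F) \<Longrightarrow> sum f I \<in> polys_over F"
  by (induction I rule: infinite_finite_induct) (auto simp: po_0 po_add)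
lemma po_prod: "is_subfield F \<Longrightarrow> (\<And>i. i \<in> I \<Longrightarrow> f i \<in> polys_over F) \<Longrightarrow> prod f I \<in> polys_over F"
  by (induction I rule: infinite_finite_induct) (auto simp: po_1 po_mult)
lemma po_pcompose: "is_subfield F \<Longrightarrow> p \<in> polys_over F \<Longrightarrow> q \<in> polys_over F \<Longrightarrow> pcompose p q \<in> polys_over F"
  by (induction p) (auto simp: pcompose_pCons po_pCons_iff intro!: po_add po_const po_mult)
lemma po_mono: "F \<subseteq> G \<Longrightarrow> polys_over F \<subseteq> polys_over G"
  by (auto simp: polys_over_def)
lemma po_poly: "is_subfield F \<Longrightarrow> p \<in> polys_over F \<Longrightarrow> x \<in> F \<Longrightarrow> poly p x \<in> F"
  by (induction p) (auto simp: po_pCons_iff sf_add sf_mult sf_0)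
lemma po_pderiv: "is_subfield F \<Longrightarrow> p \<in> polys_over F \<Longrightarrow> pderiv p \<in> polys_over F"
  using sf_of_nat[of F] by (auto simp: polys_over_def coeff_pderiv simp del: of_nat_Suc intro!: sf_mult)




section \<open>Division\<close>

lemma po_divmod:
  assumes F: "is_subfield F" and m: "m \<in> polys_over F" "m \<noteq> 0" and q: "q \<in> polys_over F"
  shows "\<exists>s r. s \<in> polys_over F \<and> r \<in> polys_over F \<and> q = m * s + r \<and> (r = 0 \<or> degree r < degree m)"
  using q
proof (induction "degree q" arbitrary: q rule: less_induct)
  case less
  show ?case
  proof (cases "q = 0 \<or> degree q < degree m")
    case True
    then show ?thesis using less.prems F by (intro exI[of _ 0] exI[of _ q]) (auto simp: po_0)
  next
    case False
    then have qnz: "q \<noteq> 0" and dg: "degree m \<le> degree q" by auto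
    define c where "c = lead_coeff q / lead_coeff m"
    define k where "k = degree q - degree m"
    define q' where "q' = q - monom c k * m"
    have cF: "c \<in> F" unfolding c_def using less.prems m F by (intro sf_divide po_coeff) auto
    have cnz: "c \<noteq> 0" using qnz m by (simp add: c_def)
    have q'po: "q' \<in> polys_over F" unfolding q'_def using F cF m less.prems
      by (intro po_diff po_mult po_monom) auto
    have dmq: "degree (monom c k * m) = degree q"
      using cnz m dg by (simp add: degree_mult_eq degree_monom_eq k_def)
    have cq: "coeff (monom c k * m) (degree q) = lead_coeff q"
      using m dg by (simp add: coeff_monom_mult k_def c_def)
    have "coeff q' (degree q) = 0" by (simp add: q'_def cq)
    moreover have "degree q' \<le> degree q" unfolding q'_def using dmq by (intro degree_diff_le) auto
    ultimately have "q' = 0 \<or> degree q' < degree q"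
      by (metis le_neq_implies_less leading_coeff_0_iff)
    then show ?thesis
    proof
      assume "q' = 0"
      then have "q = m * monom c k + 0" by (simp add: q'_def mult.commute)
      then show ?thesis using F cF by (intro exI[of _ "monom c k"] exI[of _ 0]) (auto simp: po_monom po_0)
    next
      assume "degree q' < degree q"
      from less.hyps[OF this q'po] obtain s r where
        sr: "s \<in> polys_over F" "r \<in> polys_over F" "q' = m * s + r" "r = 0 \<or> degree r < degree m" by blast
      have "q = m * (s + monom c k) + r" using sr(3) by (simp add: q'_def algebra_simps)
      then show ?thesis using sr F cF by (intro exI[of _ "s + monom c k"] exI[of _ r]) (auto simp: po_add po_monom)
    qed
  qed
qed

section \<open>Minimal polynomials\<close>

definition mpP :: "'a::field set \<Rightarrow> 'a \<Rightarrow> 'a poly \<Rightarrow> bool" where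
  "mpP F x p \<longleftrightarrow> p \<in> polys_over F \<and> lead_coeff p = 1 \<and> poly p x = 0 \<and>
       (\<forall>q\<in>polys_over F. q \<noteq> 0 \<and> poly q x = 0 \<longrightarrow> degree p \<le> degree q)"

lemma mp_ex:
  assumes F: "is_subfield F" and alg: "algebraic_over F x"
  shows "mpP F x (minpoly F x)"
proof -
  obtain q1 where "q1 \<in> polys_over F \<and> q1 \<noteq> 0 \<and> poly q1 x = 0" using alg by (auto simp: algebraic_over_def)
  then obtain q0 where q0: "q0 \<in> polys_over F \<and> q0 \<noteq> 0 \<and> poly q0 x = 0"
     and q0m: "\<forall>q. q \<in> polys_over F \<and> q \<noteq> 0 \<and> poly q x = 0 \<longrightarrow> degree q0 \<le> degree q"
    using ex_has_least_nat[of "\<lambda>q. q \<in> polys_over F \<and> q \<noteq> 0 \<and> poly q x = 0" q1 degree] by blast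
  define p where "p = smult (inverse (lead_coeff q0)) q0"
  have "mpP F x p"
    unfolding mpP_def p_def using q0 q0m F
    by (auto simp: lead_coeff_smult intro!: po_smult sf_inv po_coeff)
  then have "\<exists>p. mpP F x p" by blast
  then show ?thesis unfolding minpoly_def mpP_def[symmetric] by (rule someI_ex)
qed

locale mpctx =
  fixes F :: "'a::field set" and x :: 'a
  assumes F: "is_subfield F" and alg: "algebraic_over F x"
begin
lemma po: "minpoly F x \<in> polys_over F" using mp_ex[OF F alg] by (simp add: mpP_def)
lemma monic: "lead_coeff (minpoly F x) = 1" using mp_ex[OF F alg] by (simp add: mpP_def)
lemma root: "poly (minpoly F x) x = 0" using mp_ex[OF F alg] by (simp add: mpP_def)
lemma nz: "minpoly F x \<noteq> 0" using monic by auto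
lemma minimal: "q \<in> polys_over F \<Longrightarrow> q \<noteq> 0 \<Longrightarrow> poly q x = 0 \<Longrightarrow> degree (minpoly F x) \<le> degree q"
  using mp_ex[OF F alg] by (simp add: mpP_def)
lemma deg_pos: "degree (minpoly F x) > 0"
proof (rule ccontr)
  assume "\<not> ?thesis"
  then have "minpoly F x = [:1:]" using monic by (metis degree_eq_zeroE lead_coeff_pCons(2) neq0_conv pCons_0_0)
  then show False using root by simp
qed
lemma dvd: assumes "q \<in> polys_over F" "poly q x = 0" shows "minpoly F x dvd q"
proof -
  obtain s r where sr: "s \<in> polys_over F" "r \<in> polys_over F" "q = minpoly F x * s + r"
    "r = 0 \<or> degree r < degree (minpoly F x)"
    using po_divmod[OF F po nz assms(1)] by blast
  have "poly r x = 0" using sr(3) assms(2) root by (simp add: algebra_simps)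
  then have "r = 0" using sr(4) minimal[OF sr(2)] by fastforce
  then show ?thesis using sr(3) by simp
qed
lemma dvd_eq: assumes "q \<in> polys_over F" "poly q x = 0" "q \<noteq> 0" "degree q \<le> degree (minpoly F x)"
   "lead_coeff q = 1" shows "q = minpoly F x"
proof -
  obtain s where s: "q = minpoly F x * s" using dvd[OF assms(1,2)] by (auto elim: dvdE)
  have snz: "s \<noteq> 0" using s assms(3) by auto
  have "degree s = 0" using degree_mult_eq[OF nz snz] s assms(4) by simp
  then obtain c where "s = [:c:]" by (metis degree_eq_zeroE)
  moreover have "lead_coeff s = 1" using lead_coeff_mult[of "minpoly F x" s] s monic assms(5) by simp
  ultimately show ?thesis using s by simp
qed
end

lemma alg_mono: "algebraic_over K x \<Longrightarrow> K \<subseteq> F \<Longrightarrow> algebraic_over F x"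
  unfolding algebraic_over_def using po_mono by blast

lemma mp_conj:
  assumes F: "is_subfield F" and alg: "algebraic_over F x" and y: "poly (minpoly F x) y = 0"
  shows "minpoly F y = minpoly F x"
proof -
  interpret X: mpctx F x using F alg by unfold_locales
  have algy: "algebraic_over F y" unfolding algebraic_over_def using X.po X.nz y by blast
  interpret Y: mpctx F y using F algy by unfold_locales
  have d: "minpoly F y dvd minpoly F x" by (rule Y.dvd[OF X.po y])
  obtain s r where sr: "s \<in> polys_over F" "r \<in> polys_over F" "minpoly F x = minpoly F y * s + r"
    "r = 0 \<or> degree r < degree (minpoly F y)"
    using po_divmod[OF F Y.po Y.nz X.po] by blast
  have "minpoly F y dvd r" using d sr(3) by (metis dvd_add_right_iff dvd_triv_left)
  then have r0: "r = 0" using sr(4) dvd_imp_degree_le by fastforce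
  have snz: "s \<noteq> 0" using X.nz sr(3) r0 by auto
  have dsum: "degree (minpoly F x) = degree (minpoly F y) + degree s"
    using sr(3) r0 degree_mult_eq[OF Y.nz snz] by simp
  have "poly (minpoly F y) x = 0 \<or> poly s x = 0" using X.root sr(3) r0 by simp
  then show ?thesis
  proof
    assume "poly (minpoly F y) x = 0"
    then have "degree (minpoly F x) \<le> degree (minpoly F y)" using X.minimal[OF Y.po Y.nz] by simp
    moreover have "degree (minpoly F y) \<le> degree (minpoly F x)" using d X.nz dvd_imp_degree_le by blast
    ultimately show ?thesis using X.dvd_eq[OF Y.po _ Y.nz _ Y.monic] \<open>poly (minpoly F y) x = 0\<close> by simp
  next
    assume "poly s x = 0"
    then have "degree (minpoly F x) \<le> degree s" using X.minimal[OF sr(1) snz] by simp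
    then show ?thesis using dsum Y.deg_pos by simp
  qed
qed




section \<open>Simple extensions\<close>

definition adj :: "'a::field set \<Rightarrow> 'a \<Rightarrow> 'a set" where
  "adj F a = {poly u a | u. u \<in> polys_over F}"

lemma adjI: "u \<in> polys_over F \<Longrightarrow> poly u a \<in> adj F a" by (auto simp: adj_def)
lemma adjE: "z \<in> adj F a \<Longrightarrow> (\<And>u. u \<in> polys_over F \<Longrightarrow> z = poly u a \<Longrightarrow> P) \<Longrightarrow> P"
  by (auto simp: adj_def)

context
  fixes F :: "'a::field set" assumes F: "is_subfield F"
begin

lemma adj_sub: "F \<subseteq> adj F a"
proof
  fix c assume "c \<in> F"
  then have "poly [:c:] a \<in> adj F a" by (intro adjI po_const F)
  then show "c \<in> adj F a" by simp
qed

lemma adj_gen: "a \<in> adj F a"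
proof -
  have "poly [:0, 1:] a \<in> adj F a" by (intro adjI po_pCons F sf_0 sf_1 po_const)
  then show ?thesis by simp
qed

lemma adj_add: "x \<in> adj F a \<Longrightarrow> y \<in> adj F a \<Longrightarrow> x + y \<in> adj F a"
  by (auto elim!: adjE intro!: adjI[of "_ + _", simplified] po_add F)
lemma adj_diff: "x \<in> adj F a \<Longrightarrow> y \<in> adj F a \<Longrightarrow> x - y \<in> adj F a"
  by (auto elim!: adjE intro!: adjI[of "_ - _", simplified] po_diff F)
lemma adj_mult: "x \<in> adj F a \<Longrightarrow> y \<in> adj F a \<Longrightarrow> x * y \<in> adj F a"
  by (auto elim!: adjE intro!: adjI[of "_ * _", simplified] po_mult F)

lemma adj_least: "is_subfield G \<Longrightarrow> F \<subseteq> G \<Longrightarrow> a \<in> G \<Longrightarrow> adj F a \<subseteq> G"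
  by (auto elim!: adjE intro!: po_poly dest: po_mono)

lemma adj_inv:
  assumes algz: "algebraic_over F z" and z: "z \<in> adj F a"
  shows "inverse z \<in> adj F a"
proof (cases "z = 0")
  case True then show ?thesis using adj_sub sf_0[OF F] by auto
next
  case False
  interpret Z: mpctx F z using F algz by unfold_locales
  obtain c0 m1 where m: "minpoly F z = pCons c0 m1" by (metis pCons_cases)
  have c0: "c0 \<in> F" and m1: "m1 \<in> polys_over F" using Z.po m po_pCons_iff by metis+
  have eq: "c0 + z * poly m1 z = 0" using Z.root m by simp
  have "c0 \<noteq> 0"
  proof
    assume c00: "c0 = 0"
    then have "poly m1 z = 0" using eq False by simp
    moreover have "m1 \<noteq> 0" using Z.nz m c00 by auto
    ultimately have "degree (minpoly F z) \<le> degree m1" using Z.minimal m1 by blast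
    then show False using m c00 \<open>m1 \<noteq> 0\<close> by simp
  qed
  have "inverse z = - poly m1 z / c0"
    using eq \<open>c0 \<noteq> 0\<close> False by (simp add: field_simps) (metis add.commute add_eq_0_iff mult.commute)
  obtain u where u: "u \<in> polys_over F" "z = poly u a" using z by (rule adjE)
  have "poly (smult (- inverse c0) (pcompose m1 u)) a = - poly m1 z / c0"
    using u by (simp add: poly_pcompose divide_inverse)
  moreover have "smult (- inverse c0) (pcompose m1 u) \<in> polys_over F"
    using F c0 m1 u by (intro po_smult po_pcompose sf_uminus sf_inv) auto
  ultimately show ?thesis using \<open>inverse z = _\<close> adjI by metis
qed

lemma adj_subfield:
  assumes "\<And>z. algebraic_over F z" shows "is_subfield (adj F a)"
  unfolding is_subfield_def using adj_sub sf_0[OF F] sf_1[OF F]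
  by (auto intro: adj_add adj_diff adj_mult adj_inv assms)

lemma gen_field_adj:
  assumes "\<And>z. algebraic_over F z" shows "gen_field F a = adj F a"
proof
  show "gen_field F a \<subseteq> adj F a" unfolding gen_field_def
    using adj_subfield[OF assms] adj_sub adj_gen by blast
  show "adj F a \<subseteq> gen_field F a" unfolding gen_field_def using adj_least by blast
qed

end

section \<open>Homomorphisms\<close>

definition hom_on :: "'a::field set \<Rightarrow> ('a \<Rightarrow> 'a) \<Rightarrow> bool" where
  "hom_on A \<sigma> \<longleftrightarrow> \<sigma> 1 = 1 \<and> (\<forall>x\<in>A. \<forall>y\<in>A. \<sigma> (x + y) = \<sigma> x + \<sigma> y \<and> \<sigma> (x * y) = \<sigma> x * \<sigma> y)"

context
  fixes A :: "'a::field set" and \<sigma> assumes A: "is_subfield A" and h: "hom_on A \<sigma>"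
begin
lemma h_add: "x \<in> A \<Longrightarrow> y \<in> A \<Longrightarrow> \<sigma> (x + y) = \<sigma> x + \<sigma> y" using h by (simp add: hom_on_def)
lemma h_mult: "x \<in> A \<Longrightarrow> y \<in> A \<Longrightarrow> \<sigma> (x * y) = \<sigma> x * \<sigma> y" using h by (simp add: hom_on_def)
lemma h_1: "\<sigma> 1 = 1" using h by (simp add: hom_on_def)
lemma h_0: "\<sigma> 0 = 0"
proof -
  have "\<sigma> (0 + 0) = \<sigma> 0 + \<sigma> 0" using h_add sf_0[OF A] by blast
  then have "\<sigma> 0 + \<sigma> 0 = \<sigma> 0 + 0" by simp
  then show ?thesis by (rule add_left_imp_eq)
qed
lemma h_uminus: "x \<in> A \<Longrightarrow> \<sigma> (- x) = - \<sigma> x"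
proof -
  assume x: "x \<in> A"
  have "\<sigma> x + \<sigma> (-x) = 0" using h_add[of x "-x"] sf_uminus[OF A x] x h_0 by simp
  then show ?thesis by (metis add_eq_0_iff2 minus_minus add.commute)
qed
lemma h_diff: "x \<in> A \<Longrightarrow> y \<in> A \<Longrightarrow> \<sigma> (x - y) = \<sigma> x - \<sigma> y"
  using h_add[of x "-y"] h_uminus[of y] sf_uminus[OF A] by simp
lemma h_sum: "(\<And>i. i \<in> I \<Longrightarrow> f i \<in> A) \<Longrightarrow> \<sigma> (sum f I) = (\<Sum>i\<in>I. \<sigma> (f i))"
  by (induction I rule: infinite_finite_induct) (auto simp: h_0 h_add sf_sum[OF A])
lemma h_inj0: "x \<in> A \<Longrightarrow> \<sigma> x = 0 \<Longrightarrow> x = 0"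
proof (rule ccontr)
  assume x: "x \<in> A" "\<sigma> x = 0" "x \<noteq> 0"
  have "\<sigma> (x * inverse x) = \<sigma> x * \<sigma> (inverse x)" using x sf_inv[OF A] h_mult by blast
  then show False using x h_1 by simp
qed
lemma h_inj: "x \<in> A \<Longrightarrow> y \<in> A \<Longrightarrow> \<sigma> x = \<sigma> y \<Longrightarrow> x = y"
  using h_inj0[of "x - y"] h_diff sf_diff[OF A] by force
lemma h_poly: "p \<in> polys_over A \<Longrightarrow> z \<in> A \<Longrightarrow> \<sigma> (poly p z) = poly (map_poly \<sigma> p) (\<sigma> z)"
proof (induction p)
  case (pCons c p)
  then have c: "c \<in> A" and p: "p \<in> polys_over A" using po_pCons_iff by blast+
  have pz: "poly p z \<in> A" using po_poly[OF A p pCons.prems(2)] .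
  have "\<sigma> (poly (pCons c p) z) = \<sigma> c + \<sigma> z * \<sigma> (poly p z)"
    using c pz pCons.prems(2) by (simp add: h_add h_mult sf_mult[OF A])
  then show ?case using pCons p by (simp add: map_poly_pCons h_0)
qed (simp add: h_0)
lemma h_map_fix: "(\<And>c. c \<in> F \<Longrightarrow> \<sigma> c = c) \<Longrightarrow> p \<in> polys_over F \<Longrightarrow> map_poly \<sigma> p = p"
  by (intro poly_eqI) (simp add: coeff_map_poly h_0 po_coeff)
lemma h_map_mult: "p \<in> polys_over A \<Longrightarrow> q \<in> polys_over A \<Longrightarrow> map_poly \<sigma> (p * q) = map_poly \<sigma> p * map_poly \<sigma> q"
  by (intro poly_eqI) (simp add: coeff_map_poly h_0 coeff_mult h_sum h_mult po_coeff sf_mult[OF A])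
lemma h_map_prod: "(\<And>i. i \<in> I \<Longrightarrow> f i \<in> polys_over A) \<Longrightarrow> map_poly \<sigma> (prod f I) = (\<Prod>i\<in>I. map_poly \<sigma> (f i))"
proof (induction I rule: infinite_finite_induct)
  case (insert i I)
  then show ?case by (simp add: h_map_mult po_prod[OF A])
qed (simp_all add: h_1)
end

section \<open>Evaluation homomorphisms on simple extensions\<close>

definition ev :: "'a::field set \<Rightarrow> 'a \<Rightarrow> 'a \<Rightarrow> 'a \<Rightarrow> 'a" where
  "ev F a \<rho> x = poly (SOME u. u \<in> polys_over F \<and> poly u a = x) \<rho>"

locale evctx =
  fixes F :: "'a::field set" and a \<rho> :: 'a
  assumes F: "is_subfield F" and alg: "\<And>z. algebraic_over F z" and rho: "poly (minpoly F a) \<rho> = 0"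
begin
interpretation A: mpctx F a using F alg by unfold_locales

lemma ev_poly: assumes u: "u \<in> polys_over F" shows "ev F a \<rho> (poly u a) = poly u \<rho>"
proof -
  define v where "v = (SOME v. v \<in> polys_over F \<and> poly v a = poly u a)"
  have "\<exists>v. v \<in> polys_over F \<and> poly v a = poly u a" using u by blast
  then have v: "v \<in> polys_over F" "poly v a = poly u a" unfolding v_def by (metis (mono_tags, lifting) someI_ex)+
  have "minpoly F a dvd v - u" using A.dvd[of "v - u"] po_diff[OF F v(1) u] v(2) by simp
  then have "poly (v - u) \<rho> = 0" using rho by (metis dvd_def mult_zero_left poly_mult)
  then show ?thesis by (simp add: ev_def v_def[symmetric])
qed

lemma ev_hom: "hom_on (adj F a) (ev F a \<rho>)"
  unfolding hom_on_def
proof (intro conjI ballI)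
  show "ev F a \<rho> 1 = 1" using ev_poly[OF po_1[OF F]] by simp
  fix x y assume "x \<in> adj F a" "y \<in> adj F a"
  then obtain u v where u: "u \<in> polys_over F" "x = poly u a" and v: "v \<in> polys_over F" "y = poly v a"
    by (auto elim!: adjE)
  show "ev F a \<rho> (x + y) = ev F a \<rho> x + ev F a \<rho> y"
    using ev_poly[OF po_add[OF F u(1) v(1)]] ev_poly[OF u(1)] ev_poly[OF v(1)] u v by simp
  show "ev F a \<rho> (x * y) = ev F a \<rho> x * ev F a \<rho> y"
    using ev_poly[OF po_mult[OF F u(1) v(1)]] ev_poly[OF u(1)] ev_poly[OF v(1)] u v by simp
qed

lemma ev_fix: "c \<in> F \<Longrightarrow> ev F a \<rho> c = c"
  using ev_poly[OF po_const[OF F, of c]] by simp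

lemma ev_gen: "ev F a \<rho> a = \<rho>"
  using ev_poly[OF po_pCons[OF F sf_0[OF F] po_1[OF F]]] by (simp add: one_pCons)

lemma ev_maps: "is_subfield G \<Longrightarrow> F \<subseteq> G \<Longrightarrow> \<rho> \<in> G \<Longrightarrow> x \<in> adj F a \<Longrightarrow> ev F a \<rho> x \<in> G"
  using po_mono[of F G] by (auto elim!: adjE simp: ev_poly intro!: po_poly)

lemma adj_sf: "is_subfield (adj F a)" using adj_subfield[OF F alg] .

end




section \<open>Separability\<close>

lemma rsf_of_roots:
  fixes p :: "'a::field poly"
  assumes nz: "p \<noteq> 0" and nr: "\<And>a. \<not> (poly p a = 0 \<and> poly (pderiv p) a = 0)"
  shows "rsquarefree p"
  unfolding rsquarefree_def
proof (intro conjI allI nz)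
  fix a
  show "order a p = 0 \<or> order a p = 1"
  proof (rule ccontr)
    assume "\<not> ?thesis"
    then have "2 \<le> order a p" by auto
    then have "[:-a, 1:] ^ 2 dvd p" using order_divides by blast
    then obtain q where q: "p = [:-a, 1:] ^ 2 * q" by (auto elim: dvdE)
    have "poly p a = 0" using q by simp
    moreover have "poly (pderiv p) a = 0"
    proof -
      have "pderiv p = [:-a,1:] * pderiv ([:-a,1:] * q) + ([:-a,1:] * q) * pderiv [:-a,1:]"
        using q by (simp only: power2_eq_square mult.assoc pderiv_mult)
      then have "poly (pderiv p) a = poly [:-a,1:] a * poly (pderiv ([:-a,1:] * q)) a + poly [:-a,1:] a * poly q a * poly (pderiv [:-a,1:]) a"
        by (simp only: poly_add poly_mult)
      then show ?thesis by simp
    qed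
    ultimately show False using nr by blast
  qed
qed

lemma rsf_dvd:
  fixes p :: "'a::field poly"
  assumes "rsquarefree p" "q dvd p" shows "rsquarefree q"
proof -
  have pnz: "p \<noteq> 0" using assms(1) by (simp add: rsquarefree_def)
  then have qnz: "q \<noteq> 0" using assms(2) by auto
  show ?thesis unfolding rsquarefree_def
  proof (intro conjI allI qnz)
    fix a
    have "order a q \<le> order a p" by (rule dvd_imp_order_le[OF pnz assms(2)])
    moreover have "order a p \<le> 1" using assms(1) unfolding rsquarefree_def by (metis le_refl zero_le)
    ultimately show "order a q = 0 \<or> order a q = 1" by linarith
  qed
qed

lemma frob_add:
  fixes x y :: "'a::field"
  assumes q: "CHAR('a) > 0"
  shows "(x + y) ^ CHAR('a) = x ^ CHAR('a) + y ^ CHAR('a)"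
proof -
  let ?q = "CHAR('a)"
  have pr: "prime ?q" using prime_CHAR_semidom q by blast
  have "(x + y) ^ ?q = (\<Sum>k\<le>?q. of_nat (?q choose k) * x ^ k * y ^ (?q - k))"
    by (rule binomial_ring)
  also have "\<dots> = (\<Sum>k\<in>{0, ?q}. of_nat (?q choose k) * x ^ k * y ^ (?q - k))"
  proof (rule sum.mono_neutral_right)
    show "\<forall>i\<in>{..?q} - {0, ?q}. of_nat (?q choose i) * x ^ i * y ^ (?q - i) = 0"
    proof
      fix i assume i: "i \<in> {..?q} - {0, ?q}"
      then have "?q dvd (?q choose i)" using pr by (intro dvd_choose_prime) auto
      then have "(of_nat (?q choose i) :: 'a) = 0" by (simp add: of_nat_eq_0_iff_char_dvd)
      then show "of_nat (?q choose i) * x ^ i * y ^ (?q - i) = 0" by simp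
    qed
  qed auto
  also have "\<dots> = x ^ ?q + y ^ ?q" using q by (simp add: add.commute)
  finally show ?thesis .
qed

lemma frob_sum:
  fixes f :: "'b \<Rightarrow> 'a::field"
  assumes q: "CHAR('a) > 0"
  shows "(sum f I) ^ CHAR('a) = (\<Sum>i\<in>I. f i ^ CHAR('a))"
proof (induction I rule: infinite_finite_induct)
  case (insert i I) then show ?case by (simp add: frob_add[OF q])
qed (use q in auto)

lemma perfect_sep:
  fixes K :: "'a::field set"
  assumes pf: "perfect_field K" and alg: "\<And>z. algebraic_over K z"
  shows "rsquarefree (minpoly K x)"
proof -
  have K: "is_subfield K" using pf by (simp add: perfect_field_def)
  interpret X: mpctx K x using K alg by unfold_locales
  define f where "f = minpoly K x"
  have fpo: "f \<in> polys_over K" and fnz: "f \<noteq> 0" and fm: "lead_coeff f = 1" and fd: "degree f > 0"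
    using X.po X.nz X.monic X.deg_pos by (auto simp: f_def)
  show ?thesis unfolding f_def[symmetric]
  proof (rule rsf_of_roots[OF fnz])
    fix y show "\<not> (poly f y = 0 \<and> poly (pderiv f) y = 0)"
    proof
      assume y: "poly f y = 0 \<and> poly (pderiv f) y = 0"
      have deriv0: "pderiv f = 0"
      proof (rule ccontr)
        assume dnz: "pderiv f \<noteq> 0"
        have "degree (pderiv f) \<le> degree f - 1"
          by (rule degree_le) (auto simp: coeff_pderiv coeff_eq_0)
        then have dl: "degree (pderiv f) < degree f" using fd by linarith
        have my: "minpoly K y = f" using mp_conj[OF K alg[of x]] y by (simp add: f_def)
        interpret Y: mpctx K y using K alg by unfold_locales
        have "degree f \<le> degree (pderiv f)" using Y.minimal[OF po_pderiv[OF K fpo] dnz] y my by simp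
        then show False using dl by simp
      qed
      have cz: "\<And>n. (of_nat (Suc n) :: 'a) * coeff f (Suc n) = 0"
        using deriv0 by (metis coeff_0 coeff_pderiv)
      show False
      proof (cases "CHAR('a) = 0")
        case True
        have "(of_nat (degree f) :: 'a) * coeff f (degree f) = 0"
          using cz[of "degree f - 1"] fd by (simp del: of_nat_Suc)
        then have "(of_nat (degree f) :: 'a) = 0" using fm by simp
        then have "degree f = 0" using True by (simp add: of_nat_eq_0_iff_char_dvd)
        then show False using fd by simp
      next
        case False
        define q where "q = CHAR('a)"
        have qpos: "q > 0" using False by (simp add: q_def)
        have pr: "prime q" using prime_CHAR_semidom qpos by (simp add: q_def)
        have q2: "q \<ge> 2" using pr by (simp add: prime_ge_2_nat)
        have root: "\<forall>c\<in>K. \<exists>d\<in>K. d ^ q = c" using pf False by (simp add: perfect_field_def q_def)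
        have mult: "coeff f k \<noteq> 0 \<Longrightarrow> q dvd k" for k
        proof (cases k)
          case (Suc n)
          assume "coeff f k \<noteq> 0"
          then have "(of_nat k :: 'a) = 0" using cz[of n] Suc by simp
          then show ?thesis by (simp add: of_nat_eq_0_iff_char_dvd q_def)
        qed simp
        define D where "D = degree f"
        define E where "E = D div q"
        have qD: "q dvd D" using mult[of D] fm by (simp add: D_def)
        have DE: "D = q * E" using qD by (simp add: E_def)
        have EltD: "E < D" using fd q2 by (simp add: E_def D_def)
        define c where "c i = (SOME d. d \<in> K \<and> d ^ q = coeff f (q * i))" for i
        have c: "c i \<in> K \<and> c i ^ q = coeff f (q * i)" for i
        proof -
          have "\<exists>d. d \<in> K \<and> d ^ q = coeff f (q * i)" using root po_coeff[OF fpo] by blast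
          then show ?thesis unfolding c_def by (rule someI_ex)
        qed
        define h where "h = (\<Sum>i\<le>E. monom (c i) i)"
        have ch: "coeff h j = (if j \<le> E then c j else 0)" for j
          by (simp add: h_def coeff_sum coeff_monom)
        have hpo: "h \<in> polys_over K" unfolding h_def using c K by (intro po_sum po_monom) auto
        have "c E ^ q = 1" using c[of E] fm DE by (simp add: D_def)
        then have "c E \<noteq> 0" using qpos by (metis power_0_left zero_neq_one neq0_conv)
        then have hnz: "h \<noteq> 0" using ch[of E] by auto
        have dh: "degree h \<le> E" by (rule degree_le) (simp add: ch)
        have "poly h x ^ q = (\<Sum>i\<le>E. c i * x ^ i) ^ q" by (simp add: h_def poly_sum poly_monom)
        also have "\<dots> = (\<Sum>i\<le>E. (c i * x ^ i) ^ q)" using frob_sum[OF False[unfolded neq0_conv]] by (simp add: q_def)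
        also have "\<dots> = (\<Sum>i\<le>E. coeff f (q * i) * x ^ (q * i))"
          by (intro sum.cong refl) (simp add: power_mult_distrib c flip: power_mult mult.commute)
        also have "\<dots> = (\<Sum>k\<in>(\<lambda>i. q * i) ` {..E}. coeff f k * x ^ k)"
          using qpos by (subst sum.reindex) (auto simp: inj_on_def)
        also have "\<dots> = (\<Sum>k\<le>D. coeff f k * x ^ k)"
        proof (rule sum.mono_neutral_left)
          show "(\<lambda>i. q * i) ` {..E} \<subseteq> {..D}" using DE by auto
          show "\<forall>k\<in>{..D} - (\<lambda>i. q * i) ` {..E}. coeff f k * x ^ k = 0"
          proof
            fix k assume k: "k \<in> {..D} - (\<lambda>i. q * i) ` {..E}"
            show "coeff f k * x ^ k = 0"
            proof (rule ccontr)
              assume "coeff f k * x ^ k \<noteq> 0"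
              then have "q dvd k" using mult by auto
              then obtain i where "k = q * i" by (auto elim: dvdE)
              moreover then have "i \<le> E" using k DE qpos by auto
              ultimately show False using k by auto
            qed
          qed
        qed auto
        also have "\<dots> = poly f x" by (simp add: poly_altdef D_def)
        also have "\<dots> = 0" using X.root by (simp add: f_def)
        finally have "poly h x = 0" by simp
        then have "degree f \<le> degree h" using X.minimal[OF hpo hnz] by (simp add: f_def)
        then show False using dh EltD by (simp add: D_def)
      qed
    qed
  qed
qed




lemma alg_closed_linear:
  fixes m :: "'a::field poly"
  assumes ac: "alg_closed_type TYPE('a)" and mnz: "m \<noteq> 0" and monic: "lead_coeff m = 1"
    and rsf: "rsquarefree m" and b: "poly m b = 0" and only: "\<And>y. poly m y = 0 \<Longrightarrow> y = b"
  shows "m = [:-b, 1:]"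
proof -
  obtain q where q: "m = [:-b, 1:] * q" using b by (auto simp: poly_eq_0_iff_dvd elim: dvdE)
  have qnz: "q \<noteq> 0" using q mnz by auto
  have dq: "degree q = 0"
  proof (rule ccontr)
    assume "degree q \<noteq> 0"
    then obtain y where y: "poly q y = 0" using ac unfolding alg_closed_type_def by blast
    then have "y = b" using only q by simp
    then obtain r where r: "q = [:-b, 1:] * r" using y by (auto simp: poly_eq_0_iff_dvd elim: dvdE)
    have "m = [:-b, 1:] ^ 2 * r" using q r by (simp only: power2_eq_square mult.assoc)
    then have "[:-b, 1:] ^ 2 dvd m" by (rule dvdI)
    then have "2 \<le> order b m" using mnz order_divides by blast
    moreover have "order b m \<le> 1" using rsf unfolding rsquarefree_def by (metis le_refl zero_le)
    ultimately show False by simp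
  qed
  then obtain c where c: "q = [:c:]" by (metis degree_eq_zeroE)
  have "lead_coeff m = c" using q c lead_coeff_mult[of "[:-b,1:]" q] by simp
  then show ?thesis using q c monic by simp
qed

lemma prim2:
  fixes K :: "'a::field set"
  assumes K: "is_subfield K" and alg: "\<And>z. algebraic_over K z" and sep: "\<And>z. rsquarefree (minpoly K z)"
    and ac: "alg_closed_type TYPE('a)" and inf: "infinite K"
  shows "\<exists>c\<in>K. a \<in> adj K (a + c * b) \<and> b \<in> adj K (a + c * b)"
proof -
  interpret A: mpctx K a using K alg by unfold_locales
  interpret B0: mpctx K b using K alg by unfold_locales
  define f where "f = minpoly K a"
  define g where "g = minpoly K b"
  define Rf where "Rf = {y. poly f y = 0}"
  define Rg where "Rg = {y. poly g y = 0}"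
  have fin: "finite Rf" "finite Rg" unfolding Rf_def Rg_def f_def g_def
    using A.nz B0.nz poly_roots_finite by auto
  define Bad where "Bad = (\<lambda>(a', b'). (a' - a) / (b - b')) ` (Rf \<times> Rg)"
  have "finite Bad" using fin by (simp add: Bad_def)
  then have "infinite (K - Bad)" using inf by (rule Diff_infinite_finite)
  then obtain c where c: "c \<in> K" "c \<notin> Bad" by (metis Diff_iff finite.emptyI ex_in_conv)
  define \<gamma> where "\<gamma> = a + c * b"
  define E where "E = adj K \<gamma>"
  have E: "is_subfield E" unfolding E_def using adj_subfield[OF K alg] .
  have KE: "K \<subseteq> E" unfolding E_def using adj_sub[OF K] .
  have gE: "\<gamma> \<in> E" unfolding E_def using adj_gen[OF K] .
  have cE: "c \<in> E" using c KE by auto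
  have algE: "\<And>z. algebraic_over E z" using alg alg_mono KE by blast
  interpret B: mpctx E b using E algE by unfold_locales
  define m where "m = minpoly E b"
  define k where "k = pcompose f [:\<gamma>, -c:]"
  have fE: "f \<in> polys_over E" using A.po po_mono[OF KE] by (auto simp: f_def)
  have gE': "g \<in> polys_over E" using B0.po po_mono[OF KE] by (auto simp: g_def)
  have kE: "k \<in> polys_over E" unfolding k_def
    by (intro po_pcompose E fE po_pCons gE po_const sf_uminus cE)
  have kb: "poly k b = 0" unfolding k_def using A.root by (simp add: poly_pcompose \<gamma>_def f_def algebra_simps)
  have mg: "m dvd g" unfolding m_def using B.dvd[OF gE'] B0.root by (simp add: g_def)
  have mk: "m dvd k" unfolding m_def using B.dvd[OF kE kb] .
  have rsf: "rsquarefree m" using rsf_dvd[OF sep[of b] mg[unfolded g_def]] .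
  have only: "y = b" if y: "poly m y = 0" for y
  proof (rule ccontr)
    assume yb: "y \<noteq> b"
    have "poly g y = 0" using mg y by (auto elim!: dvdE)
    moreover have "poly k y = 0" using mk y by (auto elim!: dvdE)
    then have "poly f (\<gamma> - c * y) = 0" by (simp add: k_def poly_pcompose algebra_simps)
    moreover have "c = ((\<gamma> - c * y) - a) / (b - y)"
    proof -
      have "(\<gamma> - c * y) - a = c * (b - y)" by (simp add: \<gamma>_def algebra_simps)
      then show ?thesis using yb by simp
    qed
    ultimately have "c \<in> Bad" unfolding Bad_def Rf_def Rg_def
      by (intro rev_image_eqI[of "(\<gamma> - c * y, y)"]) auto
    then show False using c by simp
  qed
  have "m = [:-b, 1:]" using alg_closed_linear[OF ac _ _ rsf _ only] B.nz B.monic B.root by (simp add: m_def)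
  then have "-b \<in> E" using po_coeff[OF B.po, of 0] by (simp add: m_def)
  then have bE: "b \<in> E" using sf_uminus[OF E] by fastforce
  have aE: "a \<in> E" using sf_diff[OF E gE sf_mult[OF E cE bE]] by (simp add: \<gamma>_def)
  show ?thesis using c aE bE by (auto simp: E_def \<gamma>_def)
qed

lemma span_sub: "is_subfield G \<Longrightarrow> K \<subseteq> G \<Longrightarrow> S \<subseteq> G \<Longrightarrow> span_over K S \<subseteq> G"
  unfolding span_over_def by (auto intro!: sf_sum sf_mult)

lemma finite_ext_K: "finite_ext K M \<Longrightarrow> is_subfield K \<and> is_subfield M \<and> K \<subseteq> M"
  by (simp add: finite_ext_def)

lemma prim_inf:
  fixes K :: "'a::field set"
  assumes K: "is_subfield K" and alg: "\<And>z. algebraic_over K z" and sep: "\<And>z. rsquarefree (minpoly K z)"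
    and ac: "alg_closed_type TYPE('a)" and inf: "infinite K" and fe: "finite_ext K M"
  shows "\<exists>\<alpha>\<in>M. M = adj K \<alpha>"
proof -
  have M: "is_subfield M" and KM: "K \<subseteq> M" using fe by (auto simp: finite_ext_def)
  obtain S where S: "finite S" "S \<subseteq> M" "span_over K S = M" using fe by (auto simp: finite_ext_def)
  have claim: "finite T \<Longrightarrow> T \<subseteq> M \<Longrightarrow> \<exists>\<gamma>\<in>M. T \<subseteq> adj K \<gamma>" for T
  proof (induction T rule: finite_induct)
    case empty then show ?case using sf_0[OF M] by blast
  next
    case (insert s T)
    then obtain \<gamma> where g: "\<gamma> \<in> M" "T \<subseteq> adj K \<gamma>" by auto
    obtain c where c: "c \<in> K" "\<gamma> \<in> adj K (\<gamma> + c * s)" "s \<in> adj K (\<gamma> + c * s)"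
      using prim2[OF K alg sep ac inf] by blast
    have "adj K \<gamma> \<subseteq> adj K (\<gamma> + c * s)"
      using adj_least[OF K adj_subfield[OF K alg] adj_sub[OF K] c(2)] .
    moreover have "\<gamma> + c * s \<in> M" using g c insert KM by (intro sf_add[OF M] sf_mult[OF M]) auto
    ultimately show ?case using g c by blast
  qed
  obtain \<gamma> where g: "\<gamma> \<in> M" "S \<subseteq> adj K \<gamma>" using claim[OF S(1,2)] by blast
  have "M \<subseteq> adj K \<gamma>" using span_sub[OF adj_subfield[OF K alg] adj_sub[OF K] g(2)] S(3) by simp
  moreover have "adj K \<gamma> \<subseteq> M" using adj_least[OF K M KM g(1)] .
  ultimately show ?thesis using g by blast
qed

lemma finite_ext_finite:
  assumes fe: "finite_ext K M" and fin: "finite K"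
  shows "finite M"
proof -
  obtain S where S: "finite S" "S \<subseteq> M" "span_over K S = M" using fe by (auto simp: finite_ext_def)
  have K0: "0 \<in> K" using fe sf_0 by (auto simp: finite_ext_def)
  have "M \<subseteq> (\<lambda>c. \<Sum>s\<in>S. c s * s) ` (PiE S (\<lambda>_. K))"
  proof
    fix x assume "x \<in> M"
    then obtain T c where T: "x = (\<Sum>s\<in>T. c s * s)" "finite T" "T \<subseteq> S" "\<forall>s\<in>T. c s \<in> K"
      using S(3) unfolding span_over_def by blast
    define c' where "c' s = (if s \<in> T then c s else if s \<in> S then 0 else undefined)" for s
    have c'P: "c' \<in> PiE S (\<lambda>_. K)"
      unfolding PiE_iff extensional_def
    proof (intro conjI ballI CollectI allI impI)
      fix s assume "s \<in> S" then show "c' s \<in> K" using T(4) K0 by (simp add: c'_def)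
    next
      fix s assume "s \<notin> S" then show "c' s = undefined" using T(3) by (auto simp: c'_def)
    qed
    have "(\<Sum>s\<in>S. c' s * s) = (\<Sum>s\<in>T. c' s * s)"
      by (rule sum.mono_neutral_right[OF S(1) T(3)]) (simp add: c'_def)
    also have "\<dots> = x" unfolding T(1) by (rule sum.cong) (simp_all add: c'_def)
    finally show "x \<in> (\<lambda>c. \<Sum>s\<in>S. c s * s) ` (PiE S (\<lambda>_. K))"
      by (intro rev_image_eqI[OF c'P]) simp
  qed
  moreover have "finite (PiE S (\<lambda>_. K))" using S(1) fin by (intro finite_PiE) auto
  ultimately show ?thesis by (rule finite_subset[OF _ finite_imageI])
qed




lemma prim_fin:
  fixes K :: "'a::field set"
  assumes K: "is_subfield K" and fin: "finite K" and fe: "finite_ext K M"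
  shows "\<exists>\<alpha>\<in>M. M = adj K \<alpha>"
proof -
  have M: "is_subfield M" and KM: "K \<subseteq> M" using fe by (auto simp: finite_ext_def)
  have finM: "finite M" using finite_ext_finite[OF fe fin] .
  define R where "R = \<lparr>carrier = M, monoid.mult = (*), one = (1::'a), zero = (0::'a), add = ((+)::'a\<Rightarrow>'a\<Rightarrow>'a)\<rparr>"
  have cr: "cring R"
  proof (rule cringI)
    show "abelian_group R"
    proof (rule abelian_groupI)
      fix x y z assume "x \<in> carrier R" "y \<in> carrier R" "z \<in> carrier R"
      then show "x \<oplus>\<^bsub>R\<^esub> y \<in> carrier R" "x \<oplus>\<^bsub>R\<^esub> y \<oplus>\<^bsub>R\<^esub> z = x \<oplus>\<^bsub>R\<^esub> (y \<oplus>\<^bsub>R\<^esub> z)"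
        "x \<oplus>\<^bsub>R\<^esub> y = y \<oplus>\<^bsub>R\<^esub> x" "\<zero>\<^bsub>R\<^esub> \<oplus>\<^bsub>R\<^esub> x = x"
        by (simp_all add: R_def sf_add[OF M] add.assoc add.commute)
      show "\<exists>y\<in>carrier R. y \<oplus>\<^bsub>R\<^esub> x = \<zero>\<^bsub>R\<^esub>"
        using \<open>x \<in> carrier R\<close> by (intro bexI[of _ "- x"]) (simp_all add: R_def sf_uminus[OF M])
    next
      show "\<zero>\<^bsub>R\<^esub> \<in> carrier R" by (simp add: R_def sf_0[OF M])
    qed
    show "comm_monoid R"
    proof (rule comm_monoidI)
      fix x y z assume "x \<in> carrier R" "y \<in> carrier R" "z \<in> carrier R"
      then show "x \<otimes>\<^bsub>R\<^esub> y \<in> carrier R" "x \<otimes>\<^bsub>R\<^esub> y \<otimes>\<^bsub>R\<^esub> z = x \<otimes>\<^bsub>R\<^esub> (y \<otimes>\<^bsub>R\<^esub> z)"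
        "x \<otimes>\<^bsub>R\<^esub> y = y \<otimes>\<^bsub>R\<^esub> x" "\<one>\<^bsub>R\<^esub> \<otimes>\<^bsub>R\<^esub> x = x"
        by (simp_all add: R_def sf_mult[OF M] mult.assoc mult.commute)
    next
      show "\<one>\<^bsub>R\<^esub> \<in> carrier R" by (simp add: R_def sf_1[OF M])
    qed
    fix x y z assume "x \<in> carrier R" "y \<in> carrier R" "z \<in> carrier R"
    then show "(x \<oplus>\<^bsub>R\<^esub> y) \<otimes>\<^bsub>R\<^esub> z = x \<otimes>\<^bsub>R\<^esub> z \<oplus>\<^bsub>R\<^esub> y \<otimes>\<^bsub>R\<^esub> z"
      by (simp add: R_def distrib_right)
  qed
  have fR: "field R"
  proof (rule cring.cring_fieldI2[OF cr])
    show "\<zero>\<^bsub>R\<^esub> \<noteq> \<one>\<^bsub>R\<^esub>" by (simp add: R_def)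
    fix x assume "x \<in> carrier R" "x \<noteq> \<zero>\<^bsub>R\<^esub>"
    then show "\<exists>y\<in>carrier R. x \<otimes>\<^bsub>R\<^esub> y = \<one>\<^bsub>R\<^esub>"
      by (intro bexI[of _ "inverse x"]) (auto simp: R_def sf_inv[OF M])
  qed
  obtain a where a: "a \<in> carrier (mult_of R)" "carrier (mult_of R) = {a [^]\<^bsub>R\<^esub> i | i::nat. i \<in> UNIV}"
    using field.finite_field_mult_group_has_gen[OF fR] finM by (auto simp: R_def)
  have pw: "a [^]\<^bsub>R\<^esub> i = a ^ i" for i :: nat
    by (induction i) (auto simp: R_def)
  have aM: "a \<in> M" using a(1) by (simp add: R_def)
  have "M - {0} = range (\<lambda>i. a ^ i)" using a(2) pw by (auto simp: R_def)
  have adjpow: "a ^ i \<in> adj K a" for i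
    by (induction i) (auto intro!: adj_mult[OF K] adj_gen[OF K] simp: subsetD[OF adj_sub[OF K] sf_1[OF K]])
  have "M \<subseteq> adj K a"
  proof
    fix x assume x: "x \<in> M"
    show "x \<in> adj K a"
    proof (cases "x = 0")
      case True then show ?thesis using adj_sub[OF K] sf_0[OF K] by auto
    next
      case False
      then have "x \<in> range (\<lambda>i. a ^ i)" using x \<open>M - {0} = _\<close> by blast
      then show ?thesis using adjpow by auto
    qed
  qed
  moreover have "adj K a \<subseteq> M" using adj_least[OF K M KM aM] .
  ultimately show ?thesis using aM by blast
qed

lemma primitive:
  fixes K :: "'a::field set"
  assumes pf: "perfect_field K" and alg: "\<And>z. algebraic_over K z"
    and ac: "alg_closed_type TYPE('a)" and fe: "finite_ext K M"
  shows "\<exists>\<alpha>\<in>M. M = adj K \<alpha>"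
proof -
  have K: "is_subfield K" using pf by (simp add: perfect_field_def)
  show ?thesis
  proof (cases "finite K")
    case True then show ?thesis using prim_fin[OF K True fe] by blast
  next
    case False then show ?thesis using prim_inf[OF K alg perfect_sep[OF pf alg] ac False fe] by blast
  qed
qed




lemma lin_dep:
  fixes v :: "'i \<Rightarrow> nat \<Rightarrow> 'a::field"
  assumes F: "is_subfield F"
  shows "finite I \<Longrightarrow> card I > n \<Longrightarrow> (\<forall>i\<in>I. \<forall>s<n. v i s \<in> F) \<Longrightarrow>
    \<exists>la. (\<forall>i\<in>I. la i \<in> F) \<and> (\<exists>i\<in>I. la i \<noteq> 0) \<and> (\<forall>s<n. (\<Sum>i\<in>I. la i * v i s) = 0)"
proof (induction n arbitrary: I v)
  case 0
  then obtain i where "i \<in> I" by (metis card.empty ex_in_conv less_irrefl)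
  then show ?case using sf_1[OF F] by (intro exI[of _ "\<lambda>_. 1"]) auto
next
  case (Suc n)
  show ?case
  proof (cases "\<forall>i\<in>I. v i n = 0")
    case True
    obtain la where l: "\<forall>i\<in>I. la i \<in> F" "\<exists>i\<in>I. la i \<noteq> 0" "\<forall>s<n. (\<Sum>i\<in>I. la i * v i s) = 0"
      using Suc.IH[of I v] Suc.prems by auto
    have "\<forall>s<Suc n. (\<Sum>i\<in>I. la i * v i s) = 0"
      using l(3) True by (auto simp: less_Suc_eq)
    then show ?thesis using l by blast
  next
    case False
    then obtain i0 where i0: "i0 \<in> I" "v i0 n \<noteq> 0" by blast
    define I' where "I' = I - {i0}"
    define w where "w i s = v i s - (v i n / v i0 n) * v i0 s" for i s
    have fI': "finite I'" using Suc.prems by (simp add: I'_def)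
    have cI': "card I' > n" using Suc.prems i0 by (simp add: I'_def)
    have wF: "\<forall>i\<in>I'. \<forall>s<n. w i s \<in> F" using Suc.prems(3) i0 unfolding w_def I'_def
      by (auto intro!: sf_diff[OF F] sf_mult[OF F] sf_divide[OF F])
    obtain \<mu> where m: "\<forall>i\<in>I'. \<mu> i \<in> F" "\<exists>i\<in>I'. \<mu> i \<noteq> 0" "\<forall>s<n. (\<Sum>i\<in>I'. \<mu> i * w i s) = 0"
      using Suc.IH[OF fI' cI' wF] by blast
    define c where "c = (\<Sum>j\<in>I'. \<mu> j * v j n) / v i0 n"
    define la where "la i = (if i = i0 then - c else \<mu> i)" for i
    have cF: "c \<in> F" unfolding c_def using m(1) Suc.prems(3) i0 unfolding I'_def
      by (intro sf_divide[OF F] sf_sum[OF F] sf_mult[OF F]) auto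
    have lF: "\<forall>i\<in>I. la i \<in> F" using m(1) cF sf_uminus[OF F] by (auto simp: la_def I'_def)
    have lnz: "\<exists>i\<in>I. la i \<noteq> 0" using m(2) by (auto simp: la_def I'_def)
    have key: "(\<Sum>i\<in>I. la i * v i s) = (\<Sum>i\<in>I'. \<mu> i * w i s)" for s
    proof -
      have "(\<Sum>i\<in>I. la i * v i s) = la i0 * v i0 s + (\<Sum>i\<in>I'. la i * v i s)"
        unfolding I'_def by (rule sum.remove[OF Suc.prems(1) i0(1)])
      also have "(\<Sum>i\<in>I'. la i * v i s) = (\<Sum>i\<in>I'. \<mu> i * v i s)"
        by (intro sum.cong) (auto simp: la_def I'_def)
      also have "(\<Sum>i\<in>I'. \<mu> i * w i s) = (\<Sum>i\<in>I'. \<mu> i * v i s) - c * v i0 s"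
        by (simp add: w_def c_def algebra_simps sum_subtractf sum_distrib_left sum_distrib_right sum_divide_distrib)
      ultimately show ?thesis by (simp add: la_def)
    qed
    have "\<forall>s<Suc n. (\<Sum>i\<in>I. la i * v i s) = 0"
    proof (intro allI impI)
      fix s assume "s < Suc n"
      then consider "s < n" | "s = n" by linarith
      then show "(\<Sum>i\<in>I. la i * v i s) = 0"
      proof cases
        case 1 then show ?thesis using key m(3) by simp
      next
        case 2 then show ?thesis using key i0 by (simp add: w_def)
      qed
    qed
    then show ?thesis using lF lnz by blast
  qed
qed

lemma span_coords:
  assumes "finite S" "x \<in> span_over F S" "0 \<in> F"
  shows "\<exists>c. (\<forall>s\<in>S. c s \<in> F) \<and> x = (\<Sum>s\<in>S. c s * s)"
proof -
  obtain T c where T: "x = (\<Sum>s\<in>T. c s * s)" "finite T" "T \<subseteq> S" "\<forall>s\<in>T. c s \<in> F"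
    using assms(2) unfolding span_over_def by blast
  define c' where "c' s = (if s \<in> T then c s else 0)" for s
  have "(\<Sum>s\<in>S. c' s * s) = (\<Sum>s\<in>T. c' s * s)"
    by (rule sum.mono_neutral_right[OF assms(1) T(3)]) (simp add: c'_def)
  also have "\<dots> = x" unfolding T(1) by (rule sum.cong) (simp_all add: c'_def)
  finally show ?thesis using T(4) assms(3) by (intro exI[of _ c']) (auto simp: c'_def)
qed

lemma deg_le_card:
  fixes L :: "'a::field set"
  assumes L: "is_subfield L" and alg: "algebraic_over L \<alpha>" and M: "is_subfield M" and LM: "L \<subseteq> M"
    and aM: "\<alpha> \<in> M" and S: "finite S" "S \<subseteq> M" "span_over L S = M"
  shows "degree (minpoly L \<alpha>) \<le> card S"
proof (rule ccontr)
  interpret A: mpctx L \<alpha> using L alg by unfold_locales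
  define d where "d = degree (minpoly L \<alpha>)"
  assume "\<not> ?thesis"
  then have lt: "card S < d" by (simp add: d_def)
  have "\<forall>i. \<exists>c. (\<forall>s\<in>S. c s \<in> L) \<and> \<alpha> ^ i = (\<Sum>s\<in>S. c s * s)"
    using span_coords[OF S(1) _ sf_0[OF L]] S(3) sf_power[OF M aM] by blast
  then obtain cf where cf: "\<And>i. (\<forall>s\<in>S. cf i s \<in> L) \<and> \<alpha> ^ i = (\<Sum>s\<in>S. cf i s * s)" by metis
  obtain e where e: "bij_betw e {0..<card S} S" using ex_bij_betw_nat_finite[OF S(1)] by blast
  define v where "v i k = cf i (e k)" for i k
  have eS: "e k \<in> S" if "k < card S" for k using e that by (auto simp: bij_betw_def)
  have vF: "\<forall>i\<in>{..<d}. \<forall>k<card S. v i k \<in> L" using cf eS unfolding v_def by blast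
  obtain la where l: "\<forall>i\<in>{..<d}. la i \<in> L" "\<exists>i\<in>{..<d}. la i \<noteq> 0"
      "\<forall>k<card S. (\<Sum>i\<in>{..<d}. la i * v i k) = 0"
    using lin_dep[OF L, of "{..<d}" "card S" v] lt vF by auto
  have pw: "\<alpha> ^ i = (\<Sum>k\<in>{0..<card S}. v i k * e k)" for i
    using cf[of i] sum.reindex_bij_betw[OF e, of "\<lambda>s. cf i s * s"] by (simp add: v_def)
  define p where "p = (\<Sum>i<d. monom (la i) i)"
  have cp: "coeff p j = (if j < d then la j else 0)" for j by (simp add: p_def coeff_sum coeff_monom)
  have ppo: "p \<in> polys_over L" unfolding p_def using l(1) L by (intro po_sum po_monom) auto
  have pnz: "p \<noteq> 0" using l(2) cp by (metis lessThan_iff coeff_0)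
  have dp: "degree p < d"
  proof -
    have "degree p \<le> d - 1" by (rule degree_le) (auto simp: cp)
    moreover have "d > 0" using lt by simp
    ultimately show ?thesis by simp
  qed
  have "poly p \<alpha> = (\<Sum>i<d. la i * \<alpha> ^ i)" by (simp add: p_def poly_sum poly_monom)
  also have "\<dots> = (\<Sum>i<d. \<Sum>k\<in>{0..<card S}. la i * v i k * e k)"
    by (simp add: pw sum_distrib_left mult.assoc)
  also have "\<dots> = (\<Sum>k\<in>{0..<card S}. (\<Sum>i<d. la i * v i k) * e k)"
    by (subst sum.swap) (simp add: sum_distrib_right)
  also have "\<dots> = 0" using l(3) by simp
  finally have "poly p \<alpha> = 0" .
  then have "d \<le> degree p" using A.minimal[OF ppo pnz] by (simp add: d_def)
  then show False using dp by simp
qed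

lemma ext_degree_ex:
  assumes "\<exists>S. finite S \<and> S \<subseteq> M \<and> span_over L S = M"
  shows "\<exists>S. finite S \<and> card S = ext_degree L M \<and> S \<subseteq> M \<and> span_over L S = M"
proof -
  from assms obtain S where "finite S \<and> S \<subseteq> M \<and> span_over L S = M" by blast
  then have "\<exists>n S. finite S \<and> card S = n \<and> S \<subseteq> M \<and> span_over L S = M" by blast
  then show ?thesis unfolding ext_degree_def by (rule LeastI_ex)
qed




lemma map_poly_lin:
  assumes A: "is_subfield A" and h: "hom_on A \<sigma>" and c: "c \<in> A"
  shows "map_poly \<sigma> [:-c, 1:] = [:-\<sigma> c, 1:]"
  using h_0[OF A h] h_1[OF A h] h_uminus[OF A h c] by (simp add: map_poly_pCons)

lemma normal_from_roots:
  fixes L M :: "'a::field set"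
  assumes L: "is_subfield L" and algL: "\<And>z. algebraic_over L z" and M: "is_subfield M" and LM: "L \<subseteq> M"
    and aM: "\<alpha> \<in> M" and Ma: "M = adj L \<alpha>"
    and cH: "card {\<gamma>\<in>M. poly (minpoly L \<alpha>) \<gamma> = 0} = degree (minpoly L \<alpha>)"
  shows "normal_ext L M"
proof -
  interpret HA: mpctx L \<alpha> using L algL by unfold_locales
  define h where "h = minpoly L \<alpha>"
  define H where "H = {\<gamma>\<in>M. poly h \<gamma> = 0}"
  define d where "d = degree h"
  have hpo: "h \<in> polys_over L" and hnz: "h \<noteq> 0" and ha: "poly h \<alpha> = 0" and dpos: "d > 0"
    using HA.po HA.nz HA.root HA.deg_pos by (auto simp: h_def d_def)
  have hM: "h \<in> polys_over M" using hpo po_mono[OF LM] by auto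
  have finH: "finite H" unfolding H_def using poly_roots_finite[OF hnz] by (rule rev_finite_subset) auto
  have cardH: "card H = d" using cH by (simp add: H_def d_def h_def)
  have aH: "\<alpha> \<in> H" using aM ha by (simp add: H_def)
  define \<tau> where "\<tau> j = ev L \<alpha> j" for j
  have evc: "evctx L \<alpha> j" if "j \<in> H" for j
  proof
    show "poly (minpoly L \<alpha>) j = 0" using that by (simp add: H_def h_def)
  qed (use L algL in auto)
  have th: "hom_on M (\<tau> j)" if "j \<in> H" for j
    using evctx.ev_hom[OF evc[OF that]] Ma by (simp add: \<tau>_def)
  have tfix: "\<tau> j c = c" if "j \<in> H" "c \<in> L" for j c
    using evctx.ev_fix[OF evc[OF that(1)] that(2)] by (simp add: \<tau>_def)
  have tpoly: "\<tau> j (poly u \<alpha>) = poly u j" if "j \<in> H" "u \<in> polys_over L" for j u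
    using evctx.ev_poly[OF evc[OF that(1)] that(2)] by (simp add: \<tau>_def)
  have tM: "\<tau> j y \<in> M" if "j \<in> H" "y \<in> M" for j y
    using evctx.ev_maps[OF evc[OF that(1)] M LM] that Ma by (auto simp: \<tau>_def H_def)
  have tmapfix: "map_poly (\<tau> j) p = p" if "j \<in> H" "p \<in> polys_over L" for j p
    using h_map_fix[OF M th[OF that(1)] _ that(2)] tfix that(1) by blast
  have tid: "\<tau> \<alpha> y = y" if "y \<in> M" for y
  proof -
    have "y \<in> adj L \<alpha>" using that Ma by simp
    then obtain u where u: "u \<in> polys_over L" "y = poly u \<alpha>" by (rule adjE)
    then show ?thesis using tpoly[OF aH u(1)] by simp
  qed
  have tH: "\<tau> j i \<in> H" if "j \<in> H" "i \<in> H" for i j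
  proof -
    have iM: "i \<in> M" using that by (simp add: H_def)
    have "poly h (\<tau> j i) = \<tau> j (poly h i)"
      using h_poly[OF M th[OF that(1)] hM iM] tmapfix[OF that(1) hpo] by simp
    also have "\<dots> = 0" using that(2) h_0[OF M th[OF that(1)]] by (simp add: H_def)
    finally show ?thesis using tM[OF that(1) iM] by (simp add: H_def)
  qed
  have tcomp: "\<tau> j (\<tau> i y) = \<tau> (\<tau> j i) y" if "j \<in> H" "i \<in> H" "y \<in> M" for i j y
  proof -
    have "y \<in> adj L \<alpha>" using that(3) Ma by simp
    then obtain u where u: "u \<in> polys_over L" "y = poly u \<alpha>" by (rule adjE)
    have iM: "i \<in> M" using that by (simp add: H_def)
    have uM: "u \<in> polys_over M" using u(1) po_mono[OF LM] by auto
    have "\<tau> j (\<tau> i y) = \<tau> j (poly u i)" using tpoly[OF that(2) u(1)] u(2) by simp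
    also have "\<dots> = poly u (\<tau> j i)" using h_poly[OF M th[OF that(1)] uM iM] tmapfix[OF that(1) u(1)] by simp
    also have "\<dots> = \<tau> (\<tau> j i) y" using tpoly[OF tH[OF that(1,2)] u(1)] u(2) by simp
    finally show ?thesis .
  qed
  have tbij: "\<tau> j ` H = H" if "j \<in> H" for j
  proof (rule endo_inj_surj[OF finH])
    show "\<tau> j ` H \<subseteq> H" using tH that by blast
    show "inj_on (\<tau> j) H" using h_inj[OF M th[OF that]] by (auto simp: inj_on_def H_def)
  qed
  have tinj: "inj_on (\<tau> j) H" if "j \<in> H" for j
    using h_inj[OF M th[OF that]] by (auto simp: inj_on_def H_def)
  show ?thesis unfolding normal_ext_def
  proof (intro ballI allI impI)
    fix x y assume xM: "x \<in> M" and y: "poly (minpoly L x) y = 0"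
    define Q where "Q = (\<Prod>i\<in>H. [:-\<tau> i x, 1:])"
    have linM: "[:-\<tau> i x, 1:] \<in> polys_over M" if "i \<in> H" for i
      using tM[OF that xM] by (intro po_pCons M po_0 sf_1 sf_uminus) auto
    have QM: "Q \<in> polys_over M" unfolding Q_def using linM by (intro po_prod M) auto
    have Qfix: "map_poly (\<tau> j) Q = Q" if j: "j \<in> H" for j
    proof -
      have "map_poly (\<tau> j) Q = (\<Prod>i\<in>H. map_poly (\<tau> j) [:-\<tau> i x, 1:])"
        unfolding Q_def by (rule h_map_prod[OF M th[OF j]]) (rule linM)
      also have "\<dots> = (\<Prod>i\<in>H. [:-\<tau> (\<tau> j i) x, 1:])"
      proof (rule prod.cong[OF refl])
        fix i assume i: "i \<in> H"
        show "map_poly (\<tau> j) [:-\<tau> i x, 1:] = [:-\<tau> (\<tau> j i) x, 1:]"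
          using map_poly_lin[OF M th[OF j] tM[OF i xM]] tcomp[OF j i xM] by simp
      qed
      also have "\<dots> = (\<Prod>i\<in>\<tau> j ` H. [:-\<tau> i x, 1:])"
        using prod.reindex[OF tinj[OF j], of "\<lambda>i. [:-\<tau> i x, 1:]"] by simp
      also have "\<dots> = Q" using tbij[OF j] by (simp add: Q_def)
      finally show ?thesis .
    qed
    have QL: "Q \<in> polys_over L"
    proof (rule po_I)
      fix k
      define z where "z = coeff Q k"
      have zM: "z \<in> M" using po_coeff[OF QM] by (simp add: z_def)
      have zfix: "\<tau> j z = z" if "j \<in> H" for j
        using arg_cong[OF Qfix[OF that], of "\<lambda>p. coeff p k"] h_0[OF M th[OF that]]
        by (simp add: coeff_map_poly z_def)
      have "z \<in> adj L \<alpha>" using zM Ma by simp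
    then obtain u where u: "u \<in> polys_over L" "z = poly u \<alpha>" by (rule adjE)
      obtain s r where sr: "s \<in> polys_over L" "r \<in> polys_over L" "u = h * s + r" "r = 0 \<or> degree r < d"
        using po_divmod[OF L hpo hnz u(1)] by (auto simp: d_def)
      have zr: "z = poly r \<alpha>" using u(2) sr(3) ha by simp
      have rj: "poly r j = z" if "j \<in> H" for j
        using tpoly[OF that sr(2)] zr zfix[OF that] by simp
      define t where "t = r - [:z:]"
      have "t = 0"
      proof (rule ccontr)
        assume tnz: "t \<noteq> 0"
        have "H \<subseteq> {y. poly t y = 0}" using rj by (auto simp: t_def)
        then have "card H \<le> card {y. poly t y = 0}" using poly_roots_finite[OF tnz] by (rule card_mono[rotated])
        also have "\<dots> \<le> degree t" by (rule card_poly_roots_bound[OF tnz])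
        also have "degree t < d"
        proof -
          have "degree t \<le> max (degree r) (degree [:z:])" unfolding t_def by (rule degree_diff_le_max)
          then show ?thesis using sr(4) dpos by auto
        qed
        finally show False using cardH by simp
      qed
      then have "r = [:z:]" by (simp add: t_def)
      then have "z = coeff r 0" by simp
      then show "coeff Q k \<in> L" using po_coeff[OF sr(2)] by (simp add: z_def)
    qed
    have "poly Q x = 0"
      unfolding Q_def poly_prod using finH aH tid[OF xM] by (intro prod_zero) (auto intro!: bexI[of _ \<alpha>])
    then have "minpoly L x dvd Q" using mpctx.dvd[of L x Q] L algL QL by (simp add: mpctx_def)
    then have "poly Q y = 0" using y by (auto elim!: dvdE)
    then obtain i where "i \<in> H" "poly [:-\<tau> i x, 1:] y = 0"
      unfolding Q_def poly_prod using finH by (auto simp: prod_zero_iff)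
    then show "y \<in> M" using tM[OF _ xM] by simp
  qed
qed




lemma count_bound:
  fixes K L M :: "'a::field set"
  assumes K: "is_subfield K" and alg: "\<And>z. algebraic_over K z"
    and L: "is_subfield L" and M: "is_subfield M" and KL: "K \<subseteq> L" and LM: "L \<subseteq> M"
    and aM: "\<alpha> \<in> M" and Ma: "M = adj K \<alpha>" and bL: "\<beta> \<in> L" and Lb: "L = adj K \<beta>"
    and cap: "M \<inter> galois_closure K L = L"
  shows "card {\<rho>\<in>M. poly (minpoly K \<alpha>) \<rho> = 0}
     \<le> card {b\<in>L. poly (minpoly K \<beta>) b = 0} * card {\<gamma>\<in>M. poly (minpoly L \<alpha>) \<gamma> = 0}"
proof -
  have algL: "\<And>z. algebraic_over L z" using alg alg_mono KL by blast
  interpret FA: mpctx K \<alpha> using K alg by unfold_locales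
  interpret GB: mpctx K \<beta> using K alg by unfold_locales
  interpret HA: mpctx L \<alpha> using L algL by unfold_locales
  define f where "f = minpoly K \<alpha>"
  define g where "g = minpoly K \<beta>"
  define h where "h = minpoly L \<alpha>"
  define R where "R = {\<rho>\<in>M. poly f \<rho> = 0}"
  define R' where "R' = {b\<in>L. poly g b = 0}"
  define H where "H = {\<gamma>\<in>M. poly h \<gamma> = 0}"
  have KM: "K \<subseteq> M" using KL LM by blast
  have bM: "\<beta> \<in> M" using bL LM by blast
  have finR: "finite R" unfolding R_def using poly_roots_finite[OF FA.nz] by (rule rev_finite_subset) (auto simp: f_def)
  have finR': "finite R'" unfolding R'_def using poly_roots_finite[OF GB.nz] by (rule rev_finite_subset) (auto simp: g_def)
  have finH: "finite H" unfolding H_def using poly_roots_finite[OF HA.nz] by (rule rev_finite_subset) (auto simp: h_def)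
  have fM: "f \<in> polys_over M" using FA.po po_mono[OF KM] by (auto simp: f_def)
  have gM: "g \<in> polys_over M" using GB.po po_mono[OF KM] by (auto simp: g_def)
  have hM: "h \<in> polys_over M" using HA.po po_mono[OF LM] by (auto simp: h_def)
  have aR: "\<alpha> \<in> R" using aM FA.root by (simp add: R_def f_def)
  define \<sigma> where "\<sigma> \<rho> = ev K \<alpha> \<rho>" for \<rho>
  have evc: "evctx K \<alpha> \<rho>" if "\<rho> \<in> R" for \<rho>
  proof
    show "poly (minpoly K \<alpha>) \<rho> = 0" using that by (simp add: R_def f_def)
  qed (use K alg in auto)
  have sh: "hom_on M (\<sigma> \<rho>)" if "\<rho> \<in> R" for \<rho>
    using evctx.ev_hom[OF evc[OF that]] Ma by (simp add: \<sigma>_def)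
  have sfix: "\<sigma> \<rho> c = c" if "\<rho> \<in> R" "c \<in> K" for \<rho> c
    using evctx.ev_fix[OF evc[OF that(1)] that(2)] by (simp add: \<sigma>_def)
  have sgen: "\<sigma> \<rho> \<alpha> = \<rho>" if "\<rho> \<in> R" for \<rho>
    using evctx.ev_gen[OF evc[OF that(1)]] by (simp add: \<sigma>_def)
  have sM: "\<sigma> \<rho> y \<in> M" if "\<rho> \<in> R" "y \<in> M" for \<rho> y
    using evctx.ev_maps[OF evc[OF that(1)] M KM] that Ma by (auto simp: \<sigma>_def R_def)
  have smapfix: "map_poly (\<sigma> \<rho>) p = p" if "\<rho> \<in> R" "p \<in> polys_over K" for \<rho> p
    using h_map_fix[OF M sh[OF that(1)] _ that(2)] sfix that(1) by blast
  have spoly: "\<sigma> \<rho> (poly p z) = poly p (\<sigma> \<rho> z)" if "\<rho> \<in> R" "p \<in> polys_over K" "z \<in> M" for \<rho> p z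
  proof -
    have "p \<in> polys_over M" using that(2) po_mono[OF KM] by auto
    then show ?thesis using h_poly[OF M sh[OF that(1)] _ that(3)] smapfix[OF that(1,2)] by simp
  qed
  have sbR': "\<sigma> \<rho> \<beta> \<in> R'" if r: "\<rho> \<in> R" for \<rho>
  proof -
    have "poly g (\<sigma> \<rho> \<beta>) = \<sigma> \<rho> (poly g \<beta>)" using spoly[OF r GB.po bM] by (simp add: g_def)
    also have "\<dots> = 0" using GB.root h_0[OF M sh[OF r]] by (simp add: g_def)
    finally have g0: "poly g (\<sigma> \<rho> \<beta>) = 0" .
    have "\<sigma> \<rho> \<beta> \<in> galois_closure K L"
      unfolding galois_closure_def normal_ext_def using g0 bL by (auto simp: g_def)
    then have "\<sigma> \<rho> \<beta> \<in> L" using cap sM[OF r bM] by blast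
    then show ?thesis using g0 by (simp add: R'_def)
  qed
  have ssurj: "M \<subseteq> \<sigma> \<rho> ` M" if r: "\<rho> \<in> R" for \<rho>
  proof -
    have "\<sigma> \<rho> ` R \<subseteq> R"
    proof
      fix y assume "y \<in> \<sigma> \<rho> ` R"
      then obtain \<rho>' where r': "\<rho>' \<in> R" "y = \<sigma> \<rho> \<rho>'" by blast
      have "poly f y = \<sigma> \<rho> (poly f \<rho>')" using spoly[OF r FA.po, of \<rho>'] r' by (simp add: R_def f_def)
      also have "\<dots> = 0" using r' h_0[OF M sh[OF r]] by (simp add: R_def)
      finally show "y \<in> R" using sM[OF r, of \<rho>'] r' by (simp add: R_def)
    qed
    moreover have "inj_on (\<sigma> \<rho>) R" using h_inj[OF M sh[OF r]] by (auto simp: inj_on_def R_def)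
    ultimately have "\<sigma> \<rho> ` R = R" using endo_inj_surj[OF finR] by blast
    then obtain \<rho>'' where r'': "\<rho>'' \<in> R" "\<alpha> = \<sigma> \<rho> \<rho>''" using aR by (metis imageE)
    show ?thesis
    proof
      fix x assume "x \<in> M"
      then have "x \<in> adj K \<alpha>" using Ma by simp
      then obtain u where u: "u \<in> polys_over K" "x = poly u \<alpha>" by (rule adjE)
      have "\<rho>'' \<in> M" using r'' by (simp add: R_def)
      then have "poly u \<rho>'' \<in> M" using po_poly[OF M _ ] u(1) po_mono[OF KM] by blast
      moreover have "\<sigma> \<rho> (poly u \<rho>'') = x" using spoly[OF r u(1) \<open>\<rho>'' \<in> M\<close>] r'' u by simp
      ultimately show "x \<in> \<sigma> \<rho> ` M" by (metis image_eqI)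
    qed
  qed
  define Fb where "Fb b = {\<rho>\<in>R. \<sigma> \<rho> \<beta> = b}" for b
  have fibre: "card (Fb b) \<le> card H" for b
  proof (cases "Fb b = {}")
    case True then show ?thesis by simp
  next
    case False
    then obtain \<rho>0 where r0: "\<rho>0 \<in> R" "\<sigma> \<rho>0 \<beta> = b" by (auto simp: Fb_def)
    have "Fb b \<subseteq> \<sigma> \<rho>0 ` H"
    proof
      fix \<rho> assume "\<rho> \<in> Fb b"
      then have r: "\<rho> \<in> R" "\<sigma> \<rho> \<beta> = b" by (auto simp: Fb_def)
      have agree: "\<sigma> \<rho> l = \<sigma> \<rho>0 l" if "l \<in> L" for l
      proof -
        have "l \<in> adj K \<beta>" using that Lb by simp
        then obtain w where w: "w \<in> polys_over K" "l = poly w \<beta>" by (rule adjE)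
        show ?thesis using spoly[OF r(1) w(1) bM] spoly[OF r0(1) w(1) bM] r(2) r0(2) w(2) by simp
      qed
      have mapeq: "map_poly (\<sigma> \<rho>) h = map_poly (\<sigma> \<rho>0) h"
        using agree po_coeff[OF HA.po] h_0[OF M sh[OF r(1)]] h_0[OF M sh[OF r0(1)]]
        by (intro poly_eqI) (simp add: coeff_map_poly h_def)
      have "\<rho> \<in> M" using r by (simp add: R_def)
      then obtain \<gamma> where g: "\<gamma> \<in> M" "\<rho> = \<sigma> \<rho>0 \<gamma>" using ssurj[OF r0(1)] by blast
      have "0 = \<sigma> \<rho> (poly h \<alpha>)" using HA.root h_0[OF M sh[OF r(1)]] by (simp add: h_def)
      also have "\<dots> = poly (map_poly (\<sigma> \<rho>) h) \<rho>" using h_poly[OF M sh[OF r(1)] hM aM] sgen[OF r(1)] by simp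
      also have "\<dots> = poly (map_poly (\<sigma> \<rho>0) h) (\<sigma> \<rho>0 \<gamma>)" using mapeq g by simp
      also have "\<dots> = \<sigma> \<rho>0 (poly h \<gamma>)" using h_poly[OF M sh[OF r0(1)] hM g(1)] by simp
      finally have "\<sigma> \<rho>0 (poly h \<gamma>) = 0" by simp
      then have "poly h \<gamma> = 0" using h_inj0[OF M sh[OF r0(1)] po_poly[OF M hM g(1)]] by simp
      then have "\<gamma> \<in> H" using g by (simp add: H_def)
      then show "\<rho> \<in> \<sigma> \<rho>0 ` H" using g by blast
    qed
    then have "card (Fb b) \<le> card (\<sigma> \<rho>0 ` H)" using finH by (intro card_mono) auto
    also have "\<dots> \<le> card H" by (rule card_image_le[OF finH])
    finally show ?thesis .
  qed
  have "R \<subseteq> (\<Union>b\<in>R'. Fb b)" using sbR' by (auto simp: Fb_def)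
  then have "card R \<le> card (\<Union>b\<in>R'. Fb b)" using finR' by (intro card_mono) (auto simp: Fb_def finR)
  also have "\<dots> \<le> (\<Sum>b\<in>R'. card (Fb b))" by (rule card_UN_le[OF finR'])
  also have "\<dots> \<le> card R' * card H" using sum_bounded_above[of R' "\<lambda>b. card (Fb b)" "card H"] fibre by simp
  finally show ?thesis by (simp add: R_def R'_def H_def f_def g_def h_def)
qed




theorem theorem6p18:
  fixes K L M :: "'a::field set"
  assumes "alg_closed_type TYPE('a)"
    and "\<forall>x::'a. algebraic_over K x"
    and "perfect_field K"
    and "finite_ext K L"
    and "finite_ext K M"
    and "L \<subseteq> M"
    and "M \<inter> galois_closure K L = L"
    and "real (ext_degree L M) = real (cluster_size K M) / real (cluster_size K L)"
  shows "galois_ext L M"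
proof -
  note ac = assms(1) and pf = assms(3) and feL = assms(4) and feM = assms(5) and LM = assms(6)
    and cap = assms(7) and deg = assms(8)
  have alg: "\<And>z. algebraic_over K z" using assms(2) by blast
  have K: "is_subfield K" using pf by (simp add: perfect_field_def)
  have L: "is_subfield L" and KL: "K \<subseteq> L" using feL by (auto simp: finite_ext_def)
  have M: "is_subfield M" and KM: "K \<subseteq> M" using feM by (auto simp: finite_ext_def)
  have algL: "\<And>z. algebraic_over L z" using alg alg_mono KL by blast
  have sep: "separable_ext L M" unfolding separable_ext_def
  proof
    fix x assume "x \<in> M"
    interpret X: mpctx L x using L algL by unfold_locales
    interpret XK: mpctx K x using K alg by unfold_locales
    have "minpoly L x dvd minpoly K x" using X.dvd[OF _ XK.root] XK.po po_mono[OF KL] by blast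
    then show "rsquarefree (minpoly L x)" using rsf_dvd[OF perfect_sep[OF pf alg]] by blast
  qed
  define \<alpha> where "\<alpha> = (SOME \<alpha>. \<alpha> \<in> M \<and> M = gen_field K \<alpha>)"
  define \<beta> where "\<beta> = (SOME \<beta>. \<beta> \<in> L \<and> L = gen_field K \<beta>)"
  have "\<exists>\<alpha>. \<alpha> \<in> M \<and> M = gen_field K \<alpha>"
    using primitive[OF pf alg ac feM] gen_field_adj[OF K alg] by metis
  then have a: "\<alpha> \<in> M \<and> M = gen_field K \<alpha>" unfolding \<alpha>_def by (rule someI_ex)
  have "\<exists>\<beta>. \<beta> \<in> L \<and> L = gen_field K \<beta>"
    using primitive[OF pf alg ac feL] gen_field_adj[OF K alg] by metis
  then have b: "\<beta> \<in> L \<and> L = gen_field K \<beta>" unfolding \<beta>_def by (rule someI_ex)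
  have aM: "\<alpha> \<in> M" and Ma: "M = adj K \<alpha>" using a gen_field_adj[OF K alg] by auto
  have bL: "\<beta> \<in> L" and Lb: "L = adj K \<beta>" using b gen_field_adj[OF K alg] by auto
  define rM where "rM = card {\<rho>\<in>M. poly (minpoly K \<alpha>) \<rho> = 0}"
  define rL where "rL = card {b\<in>L. poly (minpoly K \<beta>) b = 0}"
  define H where "H = {\<gamma>\<in>M. poly (minpoly L \<alpha>) \<gamma> = 0}"
  have csM: "cluster_size K M = rM" unfolding cluster_size_def Let_def rM_def \<alpha>_def ..
  have csL: "cluster_size K L = rL" unfolding cluster_size_def Let_def rL_def \<beta>_def ..
  interpret GB: mpctx K \<beta> using K alg by unfold_locales
  interpret HA: mpctx L \<alpha> using L algL by unfold_locales
  have finR': "finite {b\<in>L. poly (minpoly K \<beta>) b = 0}"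
    using poly_roots_finite[OF GB.nz] by (rule rev_finite_subset) auto
  have rLpos: "rL > 0" unfolding rL_def using finR' bL GB.root by (auto simp: card_gt_0_iff)
  have count: "rM \<le> rL * card H"
    using count_bound[OF K alg L M KL LM aM Ma bL Lb cap] by (simp add: rM_def rL_def H_def)
  have NleD: "card H \<le> degree (minpoly L \<alpha>)"
  proof -
    have "card H \<le> card {y. poly (minpoly L \<alpha>) y = 0}"
      using poly_roots_finite[OF HA.nz] by (intro card_mono) (auto simp: H_def)
    also have "\<dots> \<le> degree (minpoly L \<alpha>)" by (rule card_poly_roots_bound[OF HA.nz])
    finally show ?thesis .
  qed
  have spanL: "\<exists>S. finite S \<and> S \<subseteq> M \<and> span_over L S = M"
  proof -
    obtain S where S: "finite S" "S \<subseteq> M" "span_over K S = M" using feM by (auto simp: finite_ext_def)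
    have "span_over K S \<subseteq> span_over L S" using KL unfolding span_over_def by blast
    moreover have "span_over L S \<subseteq> M" using span_sub[OF M LM S(2)] .
    ultimately show ?thesis using S by blast
  qed
  obtain S where S: "finite S" "card S = ext_degree L M" "S \<subseteq> M" "span_over L S = M"
    using ext_degree_ex[OF spanL] by blast
  have DleN: "degree (minpoly L \<alpha>) \<le> ext_degree L M"
    using deg_le_card[OF L algL M LM aM S(1) S(3) S(4)] S(2) by simp
  have "real (ext_degree L M) * real rL = real rM" using deg csM csL rLpos by (simp add: field_simps)
  then have eq: "ext_degree L M * rL = rM" by (metis of_nat_eq_iff of_nat_mult)
  then have "rL * ext_degree L M \<le> rL * card H" using count by (simp add: mult.commute)
  then have "ext_degree L M \<le> card H" using rLpos by simp
  then have cH: "card H = degree (minpoly L \<alpha>)" using NleD DleN by simp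
  have Ma': "M = adj L \<alpha>"
  proof
    show "M \<subseteq> adj L \<alpha>" using Ma po_mono[OF KL] by (auto simp: adj_def)
    show "adj L \<alpha> \<subseteq> M" using adj_least[OF L M LM aM] .
  qed
  have "normal_ext L M" using normal_from_roots[OF L algL M LM aM Ma'] cH by (simp add: H_def)
  then show ?thesis using sep by (simp add: galois_ext_def)
qed



end
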